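(* Let $\{g_1,\dots,g_p\}\subset\mathbb{N}^2$ be the minimal system of generators of a semigroup $\mathcal{F}$, and let $\tau=\{tg_1\mid t\in\mathbb{Q}\}$ be an extremal ray of $\mathcal{F}$. Assume that $g_1$ generates $\mathbb{N}^2\cap\tau$. Let $\{s_1,\dots,s_t\}$ be the minimal system of generators of a subsemigroup of $\mathbb{N}^2\cap\tau$, and let $0<\lambda_1<\cdots<\lambda_t$ be the integers with $s_i=\lambda_ig_1$. Let $\mathcal{F}'$ be the semigroup generated by $B=B_1\cup B_2$, where $$B_1=\{s_1,\dots,s_t,g_2,\dots,g_p\},\qquad B_2=\bigcup_{i=2}^p\{g_i+g_1,\dots,g_i+(\lambda_t-1)g_1\}.$$ Then $\mathcal{F}'\cap\tau=\langle s_1,\dots,s_t\rangle$ and $\mathcal{F}'\setminus\tau=\mathcal{F}\setminus\tau$.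
   Context: $\mathbb{N}=\{0,1,2,\dots\}$. For $\{a_1,\dots,a_r\}\subseteq\mathbb{N}^2$, $\langle a_1,\dots,a_r\rangle=\{\sum\lambda_ja_j\mid\lambda_j\in\mathbb{N}\}$ is the semigroup generated by them; a minimal system of generators is a generating set no proper subset of which generates. An extremal ray of $\mathcal{F}$ is a boundary ray of the cone of non-negative rational combinations of elements of $\mathcal{F}$. *)

theory Defs
  imports Complex_Main
begin

type_synonym pt = "nat \<times> nat"

definition padd :: "pt \<Rightarrow> pt \<Rightarrow> pt" where
  "padd x y = (fst x + fst y, snd x + snd y)"

definition psmul :: "nat \<Rightarrow> pt \<Rightarrow> pt" where
  "psmul k x = (k * fst x, k * snd x)"

inductive_set gen :: "pt set \<Rightarrow> pt set" for A :: "pt set" where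
  zero: "(0, 0) \<in> gen A"
| step: "a \<in> A \<Longrightarrow> x \<in> gen A \<Longrightarrow> padd a x \<in> gen A"

definition min_gens :: "pt set \<Rightarrow> pt set \<Rightarrow> bool" where
  "min_gens G F \<longleftrightarrow> gen G = F \<and> (\<forall>H. H \<subset> G \<longrightarrow> gen H \<noteq> F)"

definition rcone :: "pt set \<Rightarrow> (rat \<times> rat) set" where
  "rcone F = {x. \<exists>S c. finite S \<and> S \<subseteq> F \<and> (\<forall>s\<in>S. c s \<ge> (0::rat)) \<and>
      x = ((\<Sum>s\<in>S. c s * of_nat (fst s)), (\<Sum>s\<in>S. c s * of_nat (snd s)))}"

definition rray :: "pt \<Rightarrow> (rat \<times> rat) set" where
  "rray g = {(t * of_nat (fst g), t * of_nat (snd g)) | t. t \<ge> (0::rat)}"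

definition extremal_ray :: "pt set \<Rightarrow> pt \<Rightarrow> bool" where
  "extremal_ray F g \<longleftrightarrow> g \<noteq> (0, 0) \<and> (of_nat (fst g), of_nat (snd g)) \<in> rcone F \<and>
     (\<forall>x y. x \<in> rcone F \<and> y \<in> rcone F \<and> (fst x + fst y, snd x + snd y) \<in> rray g
        \<longrightarrow> x \<in> rray g \<and> y \<in> rray g)"

definition tau_nat :: "pt \<Rightarrow> pt set" where
  "tau_nat g = {x. \<exists>t::rat. of_nat (fst x) = t * of_nat (fst g) \<and> of_nat (snd x) = t * of_nat (snd g)}"

end

theory Submission
  imports Defs
begin

lemma padd_0[simp]: "padd (0,0) y = y" "padd y (0,0) = y"
  by (auto simp: padd_def)

lemma padd_assoc: "padd (padd a x) y = padd a (padd x y)"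
  by (simp add: padd_def)

lemma gen_add: "x \<in> gen A \<Longrightarrow> y \<in> gen A \<Longrightarrow> padd x y \<in> gen A"
proof (induction x rule: gen.induct)
  case zero then show ?case by simp
next
  case (step a x) then show ?case by (simp add: padd_assoc gen.step)
qed

lemma gen_base: "a \<in> A \<Longrightarrow> a \<in> gen A"
  using gen.step[OF _ gen.zero, of a A] by simp

lemma gen_sub: "A \<subseteq> gen B \<Longrightarrow> gen A \<subseteq> gen B"
proof
  fix x assume AB: "A \<subseteq> gen B" and xA: "x \<in> gen A"
  from xA show "x \<in> gen B"
    by (induction x rule: gen.induct) (auto intro: gen.zero gen_add[OF subsetD[OF AB]])
qed

lemma gen_mono: "A \<subseteq> B \<Longrightarrow> gen A \<subseteq> gen B"
  using gen_sub gen_base by blast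

lemma gen_single: "x \<in> gen {g} \<longleftrightarrow> (\<exists>k. x = psmul k g)"
proof
  assume "x \<in> gen {g}"
  then show "\<exists>k. x = psmul k g"
  proof (induction x rule: gen.induct)
    case zero then show ?case by (rule exI[of _ 0]) (simp add: psmul_def)
  next
    case (step a x)
    then obtain k where "x = psmul k g" by blast
    with step show ?case by (intro exI[of _ "Suc k"]) (simp add: psmul_def padd_def)
  qed
next
  assume "\<exists>k. x = psmul k g"
  then obtain k where x: "x = psmul k g" by blast
  have "psmul k g \<in> gen {g}"
  proof (induction k)
    case 0 then show ?case using gen.zero by (simp add: psmul_def)
  next
    case (Suc k)
    have "psmul (Suc k) g = padd g (psmul k g)" by (simp add: psmul_def padd_def)
    then show ?case using gen.step[OF _ Suc] by simp
  qed
  with x show "x \<in> gen {g}" by simp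
qed

lemma min_gens_zero: "min_gens G F \<Longrightarrow> (0,0) \<notin> G"
proof
  assume m: "min_gens G F" and z: "(0,0) \<in> G"
  have "G \<subseteq> gen (G - {(0,0)})"
    using gen_base[of _ "G - {(0,0)}"] gen.zero by blast
  then have "gen G \<subseteq> gen (G - {(0,0)})" by (rule gen_sub)
  moreover have "gen (G - {(0,0)}) \<subseteq> gen G" by (rule gen_mono) blast
  ultimately show False using m z unfolding min_gens_def by blast
qed

lemma psmul_gen: "s \<in> gen A \<Longrightarrow> psmul q s \<in> gen A"
proof (induction q)
  case 0 then show ?case using gen.zero by (simp add: psmul_def)
next
  case (Suc q)
  have "psmul (Suc q) s = padd s (psmul q s)" by (simp add: psmul_def padd_def)
  then show ?case using gen_add[OF Suc.prems Suc.IH[OF Suc.prems]] by simp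
qed

lemma cone_mem: "x \<in> F \<Longrightarrow> (of_nat (fst x), of_nat (snd x)) \<in> rcone F"
  unfolding rcone_def
  by (rule CollectI, rule exI[of _ "{x}"], rule exI[of _ "\<lambda>_. 1"]) simp

theorem lemma2p4:
  fixes G S :: "pt set" and g1 :: pt
  assumes "finite G" and "g1 \<in> G"
    and "min_gens G (gen G)"
    and "extremal_ray (gen G) g1"
    and "tau_nat g1 = gen {g1}"
    and "finite S" and "S \<noteq> {}" and "S \<subseteq> tau_nat g1"
    and "min_gens S (gen S)"
  shows "let lt = Max {k. psmul k g1 \<in> S};
             B1 = S \<union> (G - {g1});
             B2 = (\<Union>g\<in>G - {g1}. {padd g (psmul k g1) | k. 1 \<le> k \<and> k \<le> lt - 1});
             F' = gen (B1 \<union> B2)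
         in F' \<inter> tau_nat g1 = gen S \<and> F' - tau_nat g1 = gen G - tau_nat g1"
proof -
  define lt where "lt = Max {k. psmul k g1 \<in> S}"
  define B2 where "B2 = (\<Union>g\<in>G - {g1}. {padd g (psmul k g1) | k. 1 \<le> k \<and> k \<le> lt - 1})"
  define B where "B = S \<union> (G - {g1}) \<union> B2"
  define T where "T = tau_nat g1"
  have T: "x \<in> T \<longleftrightarrow> (\<exists>k. x = psmul k g1)" for x
    using assms(5) gen_single unfolding T_def by blast
  have g1nz: "g1 \<noteq> (0,0)" using assms(4) unfolding extremal_ray_def by blast
  have Snz: "(0,0) \<notin> S" using min_gens_zero[OF assms(9)] .
  have inj: "inj (\<lambda>k. psmul k g1)"
    using g1nz by (intro injI) (auto simp: psmul_def prod_eq_iff)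
  have K: "{k. psmul k g1 \<in> S} = (\<lambda>k. psmul k g1) -` S" by auto
  have Kfin: "finite {k. psmul k g1 \<in> S}"
    unfolding K using finite_vimageI[OF assms(6) inj] .
  obtain s where "s \<in> S" using assms(7) by blast
  then obtain k0 where "psmul k0 g1 \<in> S" using assms(8) T unfolding T_def by (metis subsetD)
  then have Kne: "{k. psmul k g1 \<in> S} \<noteq> {}" by blast
  have ltS: "psmul lt g1 \<in> S" using Max_in[OF Kfin Kne] unfolding lt_def by simp
  have ltpos: "lt \<noteq> 0" using ltS Snz by (cases lt) (auto simp: psmul_def)
  have TG: "T \<subseteq> gen G"
    using assms(5) gen_mono[of "{g1}" G] assms(2) unfolding T_def by auto
  have GoffT: "g \<notin> T" if "g \<in> G - {g1}" for g
  proof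
    assume "g \<in> T"
    then have "g \<in> gen {g1}" using assms(5) unfolding T_def by simp
    also have "gen {g1} \<subseteq> gen (G - {g})" using that assms(2) by (intro gen_mono) auto
    finally have "G \<subseteq> gen (G - {g})" using gen_base[of _ "G - {g}"] by blast
    then have "gen G \<subseteq> gen (G - {g})" by (rule gen_sub)
    moreover have "gen (G - {g}) \<subseteq> gen G" by (rule gen_mono) blast
    ultimately show False using assms(3) that unfolding min_gens_def by blast
  qed
  have split: "a \<in> T \<and> x \<in> T" if h: "a \<in> gen G" "x \<in> gen G" "padd a x \<in> T" for a x
  proof -
    obtain k where k: "padd a x = psmul k g1" using h(3) T by blast
    have "(of_nat (fst a) + of_nat (fst x), of_nat (snd a) + of_nat (snd x)) \<in> rray g1"
      unfolding rray_def using k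
      by (intro CollectI exI[of _ "of_nat k"]) (auto simp: padd_def psmul_def prod_eq_iff
          simp flip: of_nat_add of_nat_mult)
    then have "(of_nat (fst a), of_nat (snd a)) \<in> rray g1 \<and> (of_nat (fst x), of_nat (snd x)) \<in> rray g1"
      using assms(4) cone_mem[OF h(1)] cone_mem[OF h(2)] unfolding extremal_ray_def
      by (metis fst_conv snd_conv)
    then show ?thesis unfolding T_def tau_nat_def rray_def by auto
  qed
  have BG: "B \<subseteq> gen G"
  proof -
    have "S \<subseteq> gen G" using assms(8) TG unfolding T_def by blast
    moreover have "G - {g1} \<subseteq> gen G" using gen_base by blast
    moreover have "B2 \<subseteq> gen G"
    proof
      fix y assume "y \<in> B2"
      then obtain g k where gk: "g \<in> G - {g1}" "y = padd g (psmul k g1)"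
        unfolding B2_def by blast
      show "y \<in> gen G" unfolding gk(2) by (rule gen_add[OF gen_base psmul_gen[OF gen_base[OF assms(2)]]]) (use gk(1) in blast)
    qed
    ultimately show ?thesis unfolding B_def by blast
  qed
  then have genBG: "gen B \<subseteq> gen G" by (rule gen_sub)
  have c1: "z \<in> gen S" if "z \<in> gen B" "z \<in> T" for z
    using that
  proof (induction z rule: gen.induct)
    case zero then show ?case by (simp add: gen.zero)
  next
    case (step a x)
    have aG: "a \<in> gen G" using step.hyps(1) BG by blast
    have xG: "x \<in> gen G" using step.hyps(2) genBG by blast
    from split[OF aG xG step.prems] have aT: "a \<in> T" and xT: "x \<in> T" by auto
    have "a \<in> S"
    proof -
      { assume "a \<in> G - {g1}" with GoffT aT have False by blast }
      moreover
      { assume "a \<in> B2"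
        then obtain g k where g: "g \<in> G - {g1}" "a = padd g (psmul k g1)"
          unfolding B2_def by blast
        have "g \<in> gen G" using g gen_base by blast
        moreover have "psmul k g1 \<in> gen G" using psmul_gen[OF gen_base[OF assms(2)]] by blast
        ultimately have "g \<in> T" using split aT g(2) by blast
        with GoffT g have False by blast }
      ultimately show ?thesis using step.hyps(1) unfolding B_def by blast
    qed
    then show ?case using gen.step[OF _ step.IH[OF xT]] by blast
  qed
  have c1': "gen S \<subseteq> gen B \<inter> T"
  proof -
    have "gen S \<subseteq> gen B" by (rule gen_mono) (auto simp: B_def)
    moreover have "gen S \<subseteq> T"
      using assms(5,8) gen_sub[of S "{g1}"] unfolding T_def by simp
    ultimately show ?thesis by blast
  qed
  have decomp: "\<exists>m y. x = padd (psmul m g1) y \<and> y \<in> gen (G - {g1})" if "x \<in> gen G" for x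
    using that
  proof (induction x rule: gen.induct)
    case zero then show ?case
      by (intro exI[of _ 0] exI[of _ "(0,0)"]) (auto simp: psmul_def intro: gen.zero)
  next
    case (step a x)
    then obtain m y where my: "x = padd (psmul m g1) y" "y \<in> gen (G - {g1})" by blast
    show ?case
    proof (cases "a = g1")
      case True then show ?thesis using my
        by (intro exI[of _ "Suc m"] exI[of _ y]) (auto simp: psmul_def padd_def)
    next
      case False
      then have "padd a y \<in> gen (G - {g1})" using gen.step[OF _ my(2)] step.hyps(1) by blast
      then show ?thesis using my
        by (intro exI[of _ m] exI[of _ "padd a y"]) (auto simp: psmul_def padd_def)
    qed
  qed
  have c2: "x \<in> gen B" if hx: "x \<in> gen G" "x \<notin> T" for x
  proof -
    obtain m y where my: "x = padd (psmul m g1) y" "y \<in> gen (G - {g1})"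
      using decomp[OF hx(1)] by blast
    have "y \<noteq> (0,0)" using my hx(2) T by auto
    then obtain g y' where gy: "g \<in> G - {g1}" "y' \<in> gen (G - {g1})" "y = padd g y'"
      using my(2) \<open>y \<noteq> (0,0)\<close> gen.simps[of y "G - {g1}"] by blast
    define q r where "q = m div lt" and "r = m mod lt"
    have m: "m = q * lt + r" unfolding q_def r_def by simp
    have rlt: "r < lt" unfolding r_def using ltpos by simp
    have eq: "x = padd (psmul q (psmul lt g1)) (padd (padd g (psmul r g1)) y')"
      using my gy m by (simp add: padd_def psmul_def algebra_simps)
    have "psmul q (psmul lt g1) \<in> gen B"
      using psmul_gen[OF gen_base, of "psmul lt g1" B] ltS unfolding B_def by blast
    moreover have "padd g (psmul r g1) \<in> gen B"
    proof (cases "r = 0")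
      case True
      then have "padd g (psmul r g1) = g" by (simp add: psmul_def)
      moreover have "g \<in> B" using gy(1) unfolding B_def by blast
      ultimately show ?thesis using gen_base by metis
    next
      case False
      then have "padd g (psmul r g1) \<in> B2" using rlt gy(1) unfolding B2_def
        by (intro UN_I[of g]) (auto intro!: exI[of _ r])
      then show ?thesis using gen_base[of _ B] unfolding B_def by blast
    qed
    moreover have "y' \<in> gen B" using gy(2) gen_mono[of "G - {g1}" B] unfolding B_def by blast
    ultimately show ?thesis unfolding eq by (blast intro: gen_add)
  qed
  have "gen B \<inter> T = gen S" using c1 c1' by blast
  moreover have "gen B - T = gen G - T" using c2 genBG by blast
  ultimately show ?thesis unfolding Let_def lt_def[symmetric] B2_def[symmetric] T_def[symmetric]
    by (simp add: B_def)
qed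

end
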